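(* The family of curves $\tanh\xi = \tan\eta\,\tan 2t$, $0<t<\frac\pi4$, where $\xi=x+y$ and $\eta=x-y$, is a solution to the mean curvature flow in the Minkowski plane $\mathbf R^{1,1}$.
   Context: $\mathbf R^{1,1}$ is $\mathbf R^2$ with $\langle (x_1,y_1),(x_2,y_2)\rangle = x_1x_2-y_1y_2$. For a space-like curve (tangent $v$ with $\langle v,v\rangle>0$), with Minkowski arc-length $s$, $T=X_s$, $N$ the reflection of $T$ across $y=x$, and $T_s=kN$, mean curvature flow means $\langle\partial_tX,N\rangle=-k$; equivalently, writing the curve as $\xi=\xi(\eta,t)$ with $\xi_\eta>0$, $\xi_t=\xi_{\eta\eta}/\xi_\eta$. *)

theory Defs
  imports "HOL-Analysis.Analysis"
begin

text \<open>Mean curvature flow in the Minkowski plane R^{1,1}, in the graph form given in the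
context: in null coordinates xi = x + y, eta = x - y, a space-like curve is (locally) a graph
xi = f(eta, t) with f_eta > 0, and the flow is  f_t = f_{eta eta} / f_eta.\<close>

definition mcf_solution :: "real set \<Rightarrow> (real \<Rightarrow> (real \<times> real) set) \<Rightarrow> bool" where
  "mcf_solution I C \<longleftrightarrow>
     (\<exists>D :: (real \<times> real) set. \<exists>f fe fee ft :: real \<Rightarrow> real \<Rightarrow> real.
        open D \<and>
        (\<forall>t\<in>I. C t = {(x, y). (x - y, t) \<in> D \<and> x + y = f (x - y) t}) \<and>
        (\<forall>e t. (e, t) \<in> D \<longrightarrow>
            ((\<lambda>e'. f e' t) has_real_derivative fe e t) (at e) \<and>
            ((\<lambda>e'. fe e' t) has_real_derivative fee e t) (at e) \<and>
            ((\<lambda>t'. f e t') has_real_derivative ft e t) (at t) \<and>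
            fe e t > 0 \<and>
            ft e t = fee e t / fe e t))"

end

theory Submission
  imports Defs
begin

lemma tan_deriv: "cos x \<noteq> 0 \<Longrightarrow> (tan has_real_derivative (1 + tan x ^ 2)) (at x)"
  using DERIV_tan[of x] tan_sec[of x] by (simp add: power_inverse)

lemma tanh_artanh_real: "\<bar>w::real\<bar> < 1 \<Longrightarrow> tanh (artanh w) = w"
proof -
  assume w: "\<bar>w\<bar> < 1"
  have z: "(1+w)/(1-w) > 0" using w by (auto simp: abs_less_iff)
  have e: "exp (2 * artanh w) = (1+w)/(1-w)" using z by (simp add: artanh_def)
  define a where "a = artanh w"
  have "tanh a = (exp (2 * a) - 1) / (exp (2 * a) + 1)"
  proof -
    have "exp (2*a) = exp a * exp a" by (metis mult_2 exp_add)
    moreover have "\<And>E::real. E > 0 \<Longrightarrow> (E - inverse E) / (E + inverse E) = (E*E - 1)/(E*E+1)"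
      by (simp add: divide_simps)
    ultimately show ?thesis unfolding tanh_altdef exp_minus by simp
  qed
  also have "\<dots> = w" using w unfolding a_def e by (auto simp: field_simps abs_less_iff)
  finally show ?thesis unfolding a_def .
qed

lemma h_deriv:
  fixes c u :: real
  assumes "\<bar>u*c\<bar> < 1"
  shows "((\<lambda>u. artanh (u * c)) has_real_derivative c / (1 - (u*c)^2)) (at u)"
proof -
  have "((\<lambda>u. artanh (u * c)) has_real_derivative (1 / (1 - (u*c)^2)) * c) (at u)"
    by (rule DERIV_chain2[where f=artanh and g="\<lambda>u. u*c", OF artanh_real_has_field_derivative[OF assms, of UNIV]]) (auto intro!: derivative_eq_intros)
  then show ?thesis by simp
qed

lemma hk_deriv:
  fixes c u :: real
  assumes "\<bar>u*c\<bar> < 1"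
  shows "((\<lambda>u. c * (1 + u^2) / (1 - (u*c)^2)) has_real_derivative
     2*c*u*(1+c^2) / (1 - (u*c)^2)^2) (at u)"
proof -
  have ne: "1 - (u*c)^2 \<noteq> 0" using assms
    by (metis abs_square_less_1 less_irrefl right_minus_eq)
  show ?thesis using ne
    by (auto intro!: derivative_eq_intros simp: field_simps power2_eq_square)
qed

lemma D_facts:
  fixes e t :: real
  assumes "\<bar>sin e * sin (2*t)\<bar> < \<bar>cos e * cos (2*t)\<bar>" "0 < t" "t < pi/4"
  shows "cos e \<noteq> 0" "cos (2*t) > 0" "tan (2*t) > 0" "\<bar>tan e * tan (2*t)\<bar> < 1"
proof -
  show c: "cos e \<noteq> 0" using assms(1) by auto
  show c2: "cos (2*t) > 0" using assms(2,3) by (intro cos_gt_zero_pi) auto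
  show "tan (2*t) > 0" using assms(2,3) by (intro tan_gt_zero) auto
  have "\<bar>tan e * tan (2*t)\<bar> = \<bar>sin e * sin (2*t)\<bar> / \<bar>cos e * cos (2*t)\<bar>"
    by (simp add: tan_def abs_mult abs_divide)
  also have "\<dots> < 1" using assms(1) c c2 by (simp add: divide_less_eq)
  finally show "\<bar>tan e * tan (2*t)\<bar> < 1" .
qed

lemma D_back:
  fixes e t :: real
  assumes "cos e \<noteq> 0" "0 < t" "t < pi/4" "\<bar>tan e * tan (2*t)\<bar> < 1"
  shows "\<bar>sin e * sin (2*t)\<bar> < \<bar>cos e * cos (2*t)\<bar>"
proof -
  have c2: "cos (2*t) > 0" using assms(2,3) by (intro cos_gt_zero_pi) auto
  have "\<bar>sin e * sin (2*t)\<bar> = \<bar>tan e * tan (2*t)\<bar> * \<bar>cos e * cos (2*t)\<bar>"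
    using assms(1) c2 by (simp add: tan_def abs_mult)
  also have "\<dots> < \<bar>cos e * cos (2*t)\<bar>" using assms(1,4) c2 by (simp add: abs_mult)
  finally show ?thesis .
qed

theorem theorem11p2:
  shows "mcf_solution {0<..<pi/4}
           (\<lambda>t. {(x :: real, y :: real). cos (x - y) \<noteq> 0 \<and>
                   tanh (x + y) = tan (x - y) * tan (2 * t)})"
proof -
  define D :: "(real \<times> real) set" where "D = {p. \<bar>sin (fst p) * sin (2 * snd p)\<bar> < \<bar>cos (fst p) * cos (2 * snd p)\<bar>}
     \<inter> {p. 0 < snd p} \<inter> {p. snd p < pi/4}"
  define f :: "real \<Rightarrow> real \<Rightarrow> real" where "f = (\<lambda>e t. artanh (tan e * tan (2*t)))"
  define fe :: "real \<Rightarrow> real \<Rightarrow> real" where "fe = (\<lambda>e t. tan (2*t) / (1 - (tan e * tan (2*t))^2) * (1 + tan e ^ 2))"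
  define fee :: "real \<Rightarrow> real \<Rightarrow> real" where "fee = (\<lambda>e t. 2 * tan (2*t) * tan e * (1 + tan (2*t) ^ 2) / (1 - (tan e * tan (2*t))^2)^2 * (1 + tan e ^ 2))"
  define ft :: "real \<Rightarrow> real \<Rightarrow> real" where "ft = (\<lambda>e t. tan e / (1 - (tan e * tan (2*t))^2) * (2 * (1 + tan (2*t) ^ 2)))"
  have "open D" unfolding D_def
    by (intro open_Int open_Collect_less continuous_intros)
  moreover have "\<forall>t\<in>{0<..<pi/4}. {(x :: real, y :: real). cos (x - y) \<noteq> 0 \<and>
                   tanh (x + y) = tan (x - y) * tan (2 * t)} = {(x, y). (x - y, t) \<in> D \<and> x + y = f (x - y) t}"
  proof
  fix t :: real assume t: "t \<in> {0<..<pi/4}"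
  show "{(x, y). cos (x - y) \<noteq> 0 \<and> tanh (x + y) = tan (x - y) * tan (2 * t)} =
         {(x, y). (x - y, t) \<in> D \<and> x + y = f (x - y) t}"
  proof safe
    fix x y :: real
    assume a: "cos (x - y) \<noteq> 0" "tanh (x + y) = tan (x - y) * tan (2 * t)"
    have w: "\<bar>tan (x - y) * tan (2 * t)\<bar> < 1" using tanh_real_bounds[of "x+y"] a(2) by auto
    show "(x - y, t) \<in> D" unfolding D_def using D_back[OF a(1) _ _ w] t by auto
    show "x + y = f (x - y) t" using a(2) artanh_tanh_real[of "x+y"] by (simp add: f_def)
  next
    fix x y :: real assume xy: "(x - y, t) \<in> D"
    hence d: "\<bar>sin (x-y) * sin (2 * t)\<bar> < \<bar>cos (x-y) * cos (2 * t)\<bar>" "0 < t" "t < pi/4"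
      unfolding D_def by auto
    note F = D_facts[OF d]
    show "cos (x - y) = 0 \<Longrightarrow> False" using F(1) by simp
  next
    fix x y :: real assume xy: "(x - y, t) \<in> D" "x + y = f (x - y) t"
    hence d: "\<bar>sin (x-y) * sin (2 * t)\<bar> < \<bar>cos (x-y) * cos (2 * t)\<bar>" "0 < t" "t < pi/4"
      unfolding D_def by auto
    note F = D_facts[OF d]
    show "tanh (x + y) = tan (x - y) * tan (2 * t)" using tanh_artanh_real[OF F(4)] xy(2) by (simp add: f_def)
  qed
  qed
  moreover have "\<forall>e t. (e, t) \<in> D \<longrightarrow>
            ((\<lambda>e'. f e' t) has_real_derivative fe e t) (at e) \<and>
            ((\<lambda>e'. fe e' t) has_real_derivative fee e t) (at e) \<and>
            ((\<lambda>t'. f e t') has_real_derivative ft e t) (at t) \<and>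
            fe e t > 0 \<and>
            ft e t = fee e t / fe e t"
  proof (intro allI impI)
    fix e t assume "(e, t) \<in> D"
    hence d: "\<bar>sin e * sin (2 * t)\<bar> < \<bar>cos e * cos (2 * t)\<bar>" "0 < t" "t < pi/4"
      unfolding D_def by auto
    note F = D_facts[OF d]
    define u where "u = tan e"
    define c where "c = tan (2*t)"
    have w: "\<bar>u * c\<bar> < 1" using F(4) by (simp add: u_def c_def)
    have N: "1 - (u*c)^2 > 0" using w by (simp add: abs_square_less_1)
    have cpos: "c > 0" using F(3) by (simp add: c_def)
    have "((\<lambda>e'. f e' t) has_real_derivative fe e t) (at e)"
    proof -
      have "((\<lambda>e'. (\<lambda>u. artanh (u * c)) (tan e')) has_real_derivative c / (1 - (u*c)^2) * (1 + tan e ^ 2)) (at e)"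
        by (rule DERIV_chain2[where f="\<lambda>u. artanh (u * c)" and g=tan, OF _ tan_deriv[OF F(1)]])
           (use h_deriv[OF w] in \<open>simp add: u_def\<close>)
      then show ?thesis by (simp add: f_def fe_def u_def c_def)
    qed
    moreover have "((\<lambda>e'. fe e' t) has_real_derivative fee e t) (at e)"
    proof -
      have "((\<lambda>e'. (\<lambda>u. c * (1 + u^2) / (1 - (u*c)^2)) (tan e')) has_real_derivative 2*c*u*(1+c^2) / (1 - (u*c)^2)^2 * (1 + tan e ^ 2)) (at e)"
        by (rule DERIV_chain2[where f="\<lambda>u. c * (1 + u^2) / (1 - (u*c)^2)" and g=tan, OF _ tan_deriv[OF F(1)]])
           (use hk_deriv[OF w] in \<open>simp add: u_def\<close>)
      moreover have "(\<lambda>e'. fe e' t) = (\<lambda>e'. (\<lambda>u. c * (1 + u^2) / (1 - (u*c)^2)) (tan e'))"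
        by (simp add: fe_def c_def fun_eq_iff)
      ultimately show ?thesis by (simp add: fee_def u_def c_def)
    qed
    moreover have "((\<lambda>t'. f e t') has_real_derivative ft e t) (at t)"
    proof -
      have c2: "cos (2*t) \<noteq> 0" using F(2) by simp
      have tt: "((\<lambda>t'. tan (2*t')) has_real_derivative (1 + tan (2*t)^2) * 2) (at t)"
        by (rule DERIV_chain2[where f=tan and g="\<lambda>t. 2*t", OF tan_deriv[OF c2]])
           (auto intro!: derivative_eq_intros)
      have hu: "((\<lambda>c. artanh (u * c)) has_real_derivative u / (1 - (u*c)^2)) (at c)"
        using h_deriv[of c u] w by (simp add: mult.commute)
      have "((\<lambda>t'. (\<lambda>c. artanh (u * c)) (tan (2*t'))) has_real_derivative u / (1 - (u*c)^2) * ((1 + tan (2*t)^2) * 2)) (at t)"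
        by (rule DERIV_chain2[where f="\<lambda>c. artanh (u * c)" and g="\<lambda>t'. tan (2*t')", OF _ tt])
           (use hu in \<open>simp add: c_def\<close>)
      then show ?thesis by (simp add: f_def ft_def u_def c_def mult.commute)
    qed
    moreover have "fe e t > 0"
      unfolding fe_def using N cpos by (simp add: u_def[symmetric] c_def[symmetric] add_pos_nonneg)
    moreover have "ft e t = fee e t / fe e t"
    proof -
      have gen: "\<And>N a b c u :: real. N \<noteq> 0 \<Longrightarrow> a \<noteq> 0 \<Longrightarrow> c \<noteq> 0 \<Longrightarrow>
          u / N * (2 * b) = 2 * c * u * b / N^2 * a / (c / N * a)"
        by (simp add: field_simps power2_eq_square)
      have "1 + u^2 \<noteq> 0" by (metis add_pos_nonneg zero_less_one zero_le_power2 less_irrefl)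
      moreover have "1 - (u*c)^2 \<noteq> 0" "c \<noteq> 0" using N cpos by auto
      ultimately have "u / (1 - (u*c)^2) * (2 * (1 + c^2)) = 2 * c * u * (1 + c^2) / (1 - (u*c)^2)^2 * (1 + u^2) / (c / (1 - (u*c)^2) * (1 + u^2))"
        by (intro gen)
      then show ?thesis unfolding fe_def fee_def ft_def u_def c_def by (simp only: mult.assoc)
    qed
    ultimately show "((\<lambda>e'. f e' t) has_real_derivative fe e t) (at e) \<and>
            ((\<lambda>e'. fe e' t) has_real_derivative fee e t) (at e) \<and>
            ((\<lambda>t'. f e t') has_real_derivative ft e t) (at t) \<and>
            fe e t > 0 \<and>
            ft e t = fee e t / fe e t" by blast
  qed
  ultimately show ?thesis unfolding mcf_solution_def by blast
qed

end
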